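(* Let ${\bf Q}_1,{\bf Q}_2$ be $d\times d$ positive definite matrices, ${\bf G}_i={\bf Q}_i^{-1/2}$, let $({\bf X}_1,{\bf X}_2)$ be a pair of $d$-dimensional real random vectors, ${\bf Z}_{11},{\bf Z}_{22}\sim\mathcal N({\bf 0},{\bf I}_d)$ independent of each other and of $({\bf X}_1,{\bf X}_2)$, and ${\bf Y}_{ii}={\bf G}_i{\bf X}_i+{\bf Z}_{ii}$, $i=1,2$. Then ${\bf Y}_{11},{\bf Y}_{22}$ are robustly $\epsilon$-dependent if and only if ${\bf X}_1,{\bf X}_2$ are robustly $\epsilon$-dependent.
   Context: Random vectors ${\bf U}_1,{\bf U}_2$ with joint characteristic function $f_{{\bf U}_1,{\bf U}_2}({\bf t}_1,{\bf t}_2)=\mathbb E[e^{j{\bf t}_1^T{\bf U}_1+j{\bf t}_2^T{\bf U}_2}]$ and marginal characteristic functions $f_{{\bf U}_i}$ ($j=\sqrt{-1}$) are robustly $\epsilon$-dependent if $|f_{{\bf U}_1,{\bf U}_2}({\bf t}_1,{\bf t}_2)-f_{{\bf U}_1}({\bf t}_1)f_{{\bf U}_2}({\bf t}_2)|\le\epsilon\,|f_{{\bf U}_1}({\bf t}_1)|\,|f_{{\bf U}_2}({\bf t}_2)|$ for all ${\bf t}_1,{\bf t}_2$. *)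

theory Defs
  imports "HOL-Probability.Probability"
begin

definition pos_def_mat :: "real^'n^'n \<Rightarrow> bool" where
  "pos_def_mat Q \<longleftrightarrow> transpose Q = Q \<and> (\<forall>x. x \<noteq> 0 \<longrightarrow> x \<bullet> (Q *v x) > 0)"

definition inv_sqrt_mat :: "real^'n^'n \<Rightarrow> real^'n^'n" where
  "inv_sqrt_mat Q = (THE G. pos_def_mat G \<and> G ** G = matrix_inv Q)"

definition char_fun :: "'a measure \<Rightarrow> ('a \<Rightarrow> real^'n) \<Rightarrow> real^'n \<Rightarrow> complex" where
  "char_fun M U t = (LINT \<omega>|M. cis (t \<bullet> U \<omega>))"

definition joint_char_fun ::
  "'a measure \<Rightarrow> ('a \<Rightarrow> real^'n) \<Rightarrow> ('a \<Rightarrow> real^'m) \<Rightarrow> real^'n \<Rightarrow> real^'m \<Rightarrow> complex" where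
  "joint_char_fun M U1 U2 t1 t2 = (LINT \<omega>|M. cis (t1 \<bullet> U1 \<omega> + t2 \<bullet> U2 \<omega>))"

definition robustly_dependent ::
  "'a measure \<Rightarrow> real \<Rightarrow> ('a \<Rightarrow> real^'n) \<Rightarrow> ('a \<Rightarrow> real^'m) \<Rightarrow> bool" where
  "robustly_dependent M \<epsilon> U1 U2 \<longleftrightarrow>
     (\<forall>t1 t2. cmod (joint_char_fun M U1 U2 t1 t2 - char_fun M U1 t1 * char_fun M U2 t2)
              \<le> \<epsilon> * cmod (char_fun M U1 t1) * cmod (char_fun M U2 t2))"

definition std_gaussian_vec :: "'a measure \<Rightarrow> ('a \<Rightarrow> real^'n) \<Rightarrow> bool" where
  "std_gaussian_vec M Z \<longleftrightarrow>
     distributed M lborel Z (\<lambda>x. ennreal (\<Prod>i\<in>UNIV. std_normal_density (x $ i)))"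

end

theory Submission imports Defs begin

lemma sym_dot:
  fixes A :: "real^'n^'n"
  assumes "transpose A = A"
  shows "(A *v x) \<bullet> y = x \<bullet> (A *v y)"
proof -
  have "(A *v x) \<bullet> y = (x v* transpose A) \<bullet> y" by simp
  also have "\<dots> = x \<bullet> (transpose A *v y)" by (rule dot_lmul_matrix)
  finally show ?thesis using assms by simp
qed

lemma quad_nonpos_lin_zero:
  fixes b c :: real
  assumes "\<And>t. 2 * t * b + t^2 * c \<le> 0"
  shows "b = 0"
proof (rule ccontr)
  assume "b \<noteq> 0"
  define s where "s = 1 / (\<bar>c\<bar> + 1)"
  have s: "s > 0" "s * \<bar>c\<bar> < 1" unfolding s_def by (auto simp: field_simps)
  have "2 * (s*b) * b + (s*b)^2 * c \<le> 0" by (rule assms)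
  hence "b^2 * (s * (2 + s * c)) \<le> 0" by (simp add: power2_eq_square algebra_simps)
  moreover have "b^2 > 0" using \<open>b \<noteq> 0\<close> by simp
  moreover have "s * (2 + s * c) > 0"
  proof -
    have "s * c \<ge> - (s * \<bar>c\<bar>)" using s by (simp add: abs_if mult_less_0_iff)
    hence "2 + s * c > 0" using s by linarith
    thus ?thesis using s by simp
  qed
  ultimately show False by (metis mult_pos_pos not_le)
qed

lemma eigen_in_subspace:
  fixes A :: "real^'n^'n"
  assumes sym: "transpose A = A" and S: "subspace S" "S \<noteq> {0}"
    and inv: "\<And>x. x \<in> S \<Longrightarrow> A *v x \<in> S"
  shows "\<exists>u\<in>S. norm u = 1 \<and> A *v u = (u \<bullet> (A *v u)) *\<^sub>R u"
proof -
  let ?K = "S \<inter> sphere 0 1"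
  have "closed S" using S(1) by (simp add: closed_subspace)
  hence cK: "compact ?K" by (simp add: closed_Int_compact)
  obtain x where x: "x \<in> S" "x \<noteq> 0" using S subspace_0[OF S(1)] by auto
  have "x /\<^sub>R norm x \<in> ?K" using x S(1) by (simp add: subspace_scale)
  hence neK: "?K \<noteq> {}" by blast
  have cont: "continuous_on ?K (\<lambda>x. x \<bullet> (A *v x))"
    by (intro continuous_intros)
  obtain u where u: "u \<in> ?K" and umax: "\<And>y. y \<in> ?K \<Longrightarrow> y \<bullet> (A *v y) \<le> u \<bullet> (A *v u)"
    using continuous_attains_sup[OF cK neK cont] by blast
  define l where "l = u \<bullet> (A *v u)"
  have uS: "u \<in> S" and un: "norm u = 1" using u by auto
  have key: "w \<bullet> (A *v w) \<le> l * (w \<bullet> w)" if w: "w \<in> S" for w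
  proof (cases "w = 0")
    case True thus ?thesis by simp
  next
    case False
    have "w /\<^sub>R norm w \<in> ?K" using w False S(1) by (simp add: subspace_scale)
    hence "(w /\<^sub>R norm w) \<bullet> (A *v (w /\<^sub>R norm w)) \<le> l" using umax l_def by blast
    hence "(w \<bullet> (A *v w)) / (norm w)^2 \<le> l"
      by (simp add: matrix_vector_mult_scaleR inner_scaleR_left inner_scaleR_right power2_eq_square field_simps)
    moreover have "(norm w)^2 = w \<bullet> w" by (simp add: power2_norm_eq_inner)
    moreover have "w \<bullet> w > 0" using False by simp
    ultimately show ?thesis by (simp add: field_simps)
  qed
  define r where "r = A *v u - l *\<^sub>R u"
  have rS: "r \<in> S" unfolding r_def using inv[OF uS] uS S(1) by (simp add: subspace_diff subspace_scale)
  have orth: "r \<bullet> v = 0" if v: "v \<in> S" for v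
  proof -
    have "2 * t * (r \<bullet> v) + t^2 * (v \<bullet> (A *v v) - l * (v \<bullet> v)) \<le> 0" for t
    proof -
      have "u + t *\<^sub>R v \<in> S" using uS v S(1) by (simp add: subspace_add subspace_scale)
      from key[OF this]
      have "(u + t *\<^sub>R v) \<bullet> (A *v (u + t *\<^sub>R v)) \<le> l * ((u + t *\<^sub>R v) \<bullet> (u + t *\<^sub>R v))" .
      moreover have "u \<bullet> u = 1" using un by (simp add: norm_eq_1)
      moreover have "v \<bullet> (A *v u) = u \<bullet> (A *v v)" using sym_dot[OF sym, of u v] by (simp add: inner_commute)
      ultimately show ?thesis unfolding r_def l_def
        by (simp add: matrix_vector_right_distrib matrix_vector_mult_scaleR inner_add_left inner_add_right
            inner_scaleR_left inner_scaleR_right inner_diff_left inner_commute power2_eq_square algebra_simps)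
    qed
    thus ?thesis by (rule quad_nonpos_lin_zero)
  qed
  have "r = 0" using orth[OF rS] by simp
  thus ?thesis using uS un unfolding r_def l_def by auto
qed

lemma spectral_subspace:
  fixes A :: "real^'n^'n"
  assumes sym: "transpose A = A"
  shows "subspace S \<Longrightarrow> (\<And>x. x \<in> S \<Longrightarrow> A *v x \<in> S) \<Longrightarrow>
    \<exists>B. B \<subseteq> S \<and> pairwise orthogonal B \<and> (\<forall>b\<in>B. norm b = 1 \<and> A *v b = (b \<bullet> (A *v b)) *\<^sub>R b) \<and> span B = S"
proof (induction "dim S" arbitrary: S rule: less_induct)
  case less
  show ?case
  proof (cases "S = {0}")
    case True
    thus ?thesis by (intro exI[of _ "{}"]) auto
  next
    case False
    obtain u where uS: "u \<in> S" and un: "norm u = 1" and ueig: "A *v u = (u \<bullet> (A *v u)) *\<^sub>R u"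
      using eigen_in_subspace[OF sym less.prems(1) False less.prems(2)] by blast
    define S' where "S' = {x\<in>S. u \<bullet> x = 0}"
    have sub': "subspace S'" using less.prems(1) unfolding S'_def subspace_def
      by (auto simp: inner_add_right inner_scaleR_right)
    have inv': "A *v x \<in> S'" if "x \<in> S'" for x
    proof -
      have "u \<bullet> (A *v x) = (A *v u) \<bullet> x" using sym_dot[OF sym, of u x] by simp
      also have "\<dots> = 0" using that unfolding S'_def by (subst ueig) (simp add: inner_scaleR_left)
      finally show ?thesis using that less.prems(2) unfolding S'_def by auto
    qed
    have "u \<notin> S'" using un unfolding S'_def by (auto simp: norm_eq_1)
    hence "S' \<subset> S" using uS unfolding S'_def by blast
    moreover have "span S' = S'" "span S = S" using sub' less.prems(1) by (simp_all add: span_eq_iff)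
    ultimately have "span S' \<subset> span S" by (simp only:)
    hence "dim S' < dim S" by (rule dim_psubset)
    then obtain B' where B': "B' \<subseteq> S'" "pairwise orthogonal B'"
      "\<forall>b\<in>B'. norm b = 1 \<and> A *v b = (b \<bullet> (A *v b)) *\<^sub>R b" "span B' = S'"
      using less.hyps[OF _ sub' inv'] by blast
    have "insert u B' \<subseteq> S" using B'(1) uS unfolding S'_def by auto
    moreover have "pairwise orthogonal (insert u B')"
      using B'(1,2) unfolding pairwise_insert S'_def orthogonal_def by (auto simp: inner_commute)
    moreover have "span (insert u B') = S"
    proof
      show "span (insert u B') \<subseteq> S" using \<open>insert u B' \<subseteq> S\<close> less.prems(1) by (simp add: span_minimal)
      show "S \<subseteq> span (insert u B')"
      proof
        fix x assume x: "x \<in> S"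
        have "x - (u \<bullet> x) *\<^sub>R u \<in> S'" using x uS less.prems(1) un unfolding S'_def
          by (auto simp: subspace_diff subspace_scale inner_diff_right inner_scaleR_right norm_eq_1)
        thus "x \<in> span (insert u B')" using B'(4) by (auto simp: span_breakdown_eq)
      qed
    qed
    ultimately show ?thesis using B'(3) un ueig by (intro exI[of _ "insert u B'"]) auto
  qed
qed

lemma orthonormal_coeff:
  fixes B :: "(real^'n) set"
  assumes fin: "finite B" and po: "pairwise orthogonal B" and nb: "\<forall>b\<in>B. norm b = 1" and c: "c \<in> B"
  shows "c \<bullet> (\<Sum>b\<in>B. f b *\<^sub>R b) = f c"
proof -
  have "c \<bullet> (\<Sum>b\<in>B. f b *\<^sub>R b) = (\<Sum>b\<in>B. f b * (c \<bullet> b))"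
    by (simp add: inner_sum_right inner_scaleR_right)
  also have "\<dots> = f c * (c \<bullet> c) + (\<Sum>b\<in>B - {c}. f b * (c \<bullet> b))"
    using fin c by (simp add: sum.remove)
  also have "(\<Sum>b\<in>B - {c}. f b * (c \<bullet> b)) = 0"
    using po c by (intro sum.neutral) (auto simp: pairwise_def orthogonal_def)
  also have "c \<bullet> c = 1" using nb c by (simp add: norm_eq_1)
  finally show ?thesis by simp
qed

lemma orthonormal_expand:
  fixes B :: "(real^'n) set"
  assumes fin: "finite B" and po: "pairwise orthogonal B" and nb: "\<forall>b\<in>B. norm b = 1"
    and sp: "span B = UNIV"
  shows "x = (\<Sum>b\<in>B. (b \<bullet> x) *\<^sub>R b)"
proof -
  have "x \<in> span B" using sp by simp
  then obtain u where u: "x = (\<Sum>v\<in>B. u v *\<^sub>R v)" using fin by (auto simp: span_finite)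
  have "b \<bullet> x = u b" if "b \<in> B" for b using orthonormal_coeff[OF fin po nb that] u by simp
  thus ?thesis using u by (metis (no_types, lifting) sum.cong)
qed

lemma outer_mat_mult:
  fixes B :: "(real^'n) set"
  shows "(\<chi> i j. \<Sum>b\<in>B. c b * b$i * b$j) *v x = (\<Sum>b\<in>B. (c b * (b \<bullet> x)) *\<^sub>R b)"
  by (simp add: vec_eq_iff matrix_vector_mult_def inner_vec_def sum_distrib_left sum_distrib_right
      sum_component algebra_simps) (subst sum.swap, simp add: algebra_simps)

lemma pd_sqrt_exists:
  fixes P :: "real^'n^'n"
  assumes pd: "pos_def_mat P"
  shows "\<exists>G. pos_def_mat G \<and> G ** G = P"
proof -
  have sym: "transpose P = P" and pos: "\<And>x. x \<noteq> 0 \<Longrightarrow> x \<bullet> (P *v x) > 0"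
    using pd unfolding pos_def_mat_def by auto
  obtain B where B: "pairwise orthogonal B" "\<forall>b\<in>B. norm b = 1 \<and> P *v b = (b \<bullet> (P *v b)) *\<^sub>R b"
    "span B = UNIV"
    using spectral_subspace[OF sym, of UNIV] by auto
  have fin: "finite B" using B(1) by (rule pairwise_orthogonal_imp_finite)
  have nb: "\<forall>b\<in>B. norm b = 1" using B(2) by auto
  define lam where "lam b = b \<bullet> (P *v b)" for b
  have lpos: "lam b > 0" if "b \<in> B" for b
    using pos[of b] nb that unfolding lam_def by (metis norm_zero zero_neq_one)
  have eig: "P *v b = lam b *\<^sub>R b" if "b \<in> B" for b using B(2) that unfolding lam_def by auto
  note exp = orthonormal_expand[OF fin B(1) nb B(3)]
  note coeff = orthonormal_coeff[OF fin B(1) nb]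
  define G where "G = (\<chi> i j. \<Sum>b\<in>B. sqrt (lam b) * b$i * b$j)"
  have Gx: "G *v x = (\<Sum>b\<in>B. (sqrt (lam b) * (b \<bullet> x)) *\<^sub>R b)" for x
    unfolding G_def by (rule outer_mat_mult)
  have "transpose G = G" unfolding G_def transpose_def by (simp add: vec_eq_iff algebra_simps)
  moreover have "x \<bullet> (G *v x) > 0" if "x \<noteq> 0" for x
  proof -
    have "\<exists>b\<in>B. b \<bullet> x \<noteq> 0"
    proof (rule ccontr)
      assume "\<not> ?thesis"
      hence "x = (\<Sum>b\<in>B. 0 *\<^sub>R b)" using exp[of x] by (metis (no_types, lifting) sum.cong)
      thus False using that by simp
    qed
    then obtain c where c: "c \<in> B" "c \<bullet> x \<noteq> 0" by blast
    have "x \<bullet> (G *v x) = (\<Sum>b\<in>B. sqrt (lam b) * (b \<bullet> x)^2)"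
      unfolding Gx by (simp add: inner_sum_right inner_scaleR_right inner_commute power2_eq_square algebra_simps)
    also have "\<dots> > 0"
    proof (rule sum_pos2[OF fin c(1)])
      show "0 < sqrt (lam c) * (c \<bullet> x)^2" using c lpos[OF c(1)] by simp
      show "0 \<le> sqrt (lam b) * (b \<bullet> x)^2" if "b \<in> B" for b using lpos[OF that] by simp
    qed
    finally show ?thesis .
  qed
  moreover have "G ** G = P"
  proof (subst matrix_eq, intro allI)
    fix x
    have "(G ** G) *v x = G *v (G *v x)" by (simp add: matrix_vector_mul_assoc)
    also have "\<dots> = (\<Sum>b\<in>B. (sqrt (lam b) * (b \<bullet> (G *v x))) *\<^sub>R b)" by (rule Gx)
    also have "\<dots> = (\<Sum>b\<in>B. (lam b * (b \<bullet> x)) *\<^sub>R b)"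
    proof (rule sum.cong[OF refl])
      fix b assume b: "b \<in> B"
      have "b \<bullet> (G *v x) = sqrt (lam b) * (b \<bullet> x)" unfolding Gx by (rule coeff[OF b])
      thus "(sqrt (lam b) * (b \<bullet> (G *v x))) *\<^sub>R b = (lam b * (b \<bullet> x)) *\<^sub>R b"
        using lpos[OF b] by (simp add: real_sqrt_mult_self mult.assoc[symmetric])
    qed
    also have "\<dots> = (\<Sum>b\<in>B. (b \<bullet> x) *\<^sub>R (P *v b))"
      by (intro sum.cong refl) (simp add: eig)
    also have "\<dots> = P *v (\<Sum>b\<in>B. (b \<bullet> x) *\<^sub>R b)"
      by (simp add: linear_sum[OF matrix_vector_mul_linear] matrix_vector_mult_scaleR)
    also have "\<dots> = P *v x" using exp[of x] by simp
    finally show "(G ** G) *v x = P *v x" .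
  qed
  ultimately show ?thesis unfolding pos_def_mat_def by blast
qed

lemma mat_sub_ldist: "(A::real^'n^'n) ** (B - C) = A ** B - A ** C"
  by (vector matrix_matrix_mult_def sum_subtractf[symmetric] algebra_simps)

lemma mat_sub_rdist: "((B::real^'n^'n) - C) ** A = B ** A - C ** A"
  by (vector matrix_matrix_mult_def sum_subtractf[symmetric] algebra_simps)

lemma mat_uminus_r: "(A::real^'n^'n) ** (- B) = - (A ** B)"
  by (vector matrix_matrix_mult_def sum_negf[symmetric])

lemma trace_uminus: "trace (- (A::real^'n^'n)) = - trace A"
  by (simp add: trace_def sum_negf)

lemma diag_inner: "(X::real^'n^'n)$i$i = axis i 1 \<bullet> (X *v axis i 1)"
proof -
  have "axis i 1 \<bullet> (X *v axis i 1) = (X *v axis i 1)$i" by (simp add: inner_axis')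
  also have "\<dots> = X$i$i" by (simp add: matrix_vector_mult_def axis_def if_distrib cong: if_cong)
  finally show ?thesis by simp
qed

lemma trace_quad:
  fixes D M :: "real^'n^'n"
  assumes "transpose D = D"
  shows "trace (D ** M ** D) = (\<Sum>i\<in>UNIV. (D *v axis i 1) \<bullet> (M *v (D *v axis i 1)))"
  unfolding trace_def
proof (rule sum.cong[OF refl])
  fix i
  have "(D ** M ** D)$i$i = axis i 1 \<bullet> (D *v (M *v (D *v axis i 1)))"
    by (simp add: diag_inner matrix_vector_mul_assoc matrix_mul_assoc)
  also have "\<dots> = (D *v axis i 1) \<bullet> (M *v (D *v axis i 1))"
    using sym_dot[OF assms, of "axis i 1" "M *v (D *v axis i 1)"] by simp
  finally show "(D ** M ** D)$i$i = (D *v axis i 1) \<bullet> (M *v (D *v axis i 1))" .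
qed

lemma pd_sqrt_unique:
  fixes G H :: "real^'n^'n"
  assumes G: "pos_def_mat G" and H: "pos_def_mat H" and eq: "G ** G = H ** H"
  shows "G = H"
proof -
  define D where "D = G - H"
  have symD: "transpose D = D" using G H unfolding D_def pos_def_mat_def
    by (simp add: transpose_def vec_eq_iff)
  have GD: "G ** D = - (D ** H)" unfolding D_def mat_sub_ldist mat_sub_rdist using eq by simp
  have "trace (D ** G ** D) = - trace (D ** H ** D)"
  proof -
    have "trace (D ** G ** D) = trace (D ** (G ** D))" by (simp add: matrix_mul_assoc)
    also have "\<dots> = - trace (D ** (D ** H))" by (simp add: GD mat_uminus_r trace_uminus)
    also have "trace (D ** (D ** H)) = trace ((D ** H) ** D)" by (rule trace_mul_sym)
    finally show ?thesis by simp
  qed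
  moreover have nnG: "\<And>i. 0 \<le> (D *v axis i 1) \<bullet> (G *v (D *v axis i 1))"
    using G unfolding pos_def_mat_def by (metis inner_zero_left order.refl less_imp_le)
  moreover have nnH: "\<And>i. 0 \<le> (D *v axis i 1) \<bullet> (H *v (D *v axis i 1))"
    using H unfolding pos_def_mat_def by (metis inner_zero_left order.refl less_imp_le)
  ultimately have "(\<Sum>i\<in>UNIV. (D *v axis i 1) \<bullet> (G *v (D *v axis i 1))) = 0"
    unfolding trace_quad[OF symD]
    by (smt (verit, ccfv_SIG) sum_nonneg)
  hence "\<forall>i. (D *v axis i 1) \<bullet> (G *v (D *v axis i 1)) = 0"
    using nnG by (simp add: sum_nonneg_eq_0_iff)
  hence "\<forall>i. D *v axis i 1 = 0" using G unfolding pos_def_mat_def by (metis less_irrefl)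
  hence "D = 0"
    by (simp add: vec_eq_iff matrix_vector_mult_def axis_def if_distrib cong: if_cong)
  thus ?thesis unfolding D_def by simp
qed

lemma pd_inj:
  fixes Q :: "real^'n^'n"
  assumes "pos_def_mat Q"
  shows "inj ((*v) Q)"
proof (rule injI)
  fix x y assume "Q *v x = Q *v y"
  hence "Q *v (x - y) = 0" by (simp add: matrix_vector_mult_diff_distrib)
  hence "(x - y) \<bullet> (Q *v (x - y)) = 0" by simp
  thus "x = y" using assms unfolding pos_def_mat_def by (metis less_irrefl right_minus_eq)
qed

lemma pd_invertible:
  fixes Q :: "real^'n^'n"
  assumes "pos_def_mat Q"
  shows "Q ** matrix_inv Q = mat 1 \<and> matrix_inv Q ** Q = mat 1"
proof -
  have "\<exists>B. B ** Q = mat 1" using pd_inj[OF assms] matrix_left_invertible_injective by blast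
  hence "invertible Q" by (simp add: invertible_left_inverse)
  thus ?thesis unfolding invertible_def matrix_inv_def by (rule someI_ex)
qed

lemma pd_surj:
  fixes Q :: "real^'n^'n"
  assumes "pos_def_mat Q"
  shows "surj ((*v) Q)"
  using pd_invertible[OF assms] matrix_right_invertible_surjective by blast

lemma pd_inv:
  fixes Q :: "real^'n^'n"
  assumes pd: "pos_def_mat Q"
  shows "pos_def_mat (matrix_inv Q)"
proof -
  define R where "R = matrix_inv Q"
  have QR: "Q ** R = mat 1" "R ** Q = mat 1" using pd_invertible[OF pd] unfolding R_def by auto
  have sQ: "transpose Q = Q" and pQ: "\<And>x. x \<noteq> 0 \<Longrightarrow> x \<bullet> (Q *v x) > 0" using pd unfolding pos_def_mat_def by auto
  have "transpose R ** Q = mat 1"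
    using QR(1) by (metis matrix_transpose_mul sQ transpose_mat)
  hence "transpose R = R"
    by (metis QR(1) matrix_mul_assoc matrix_mul_lid matrix_mul_rid)
  moreover have "x \<bullet> (R *v x) > 0" if "x \<noteq> 0" for x
  proof -
    define y where "y = R *v x"
    have xy: "x = Q *v y" unfolding y_def by (simp add: matrix_vector_mul_assoc QR)
    hence "y \<noteq> 0" using that by auto
    hence "y \<bullet> (Q *v y) > 0" by (rule pQ)
    thus ?thesis by (metis inner_commute xy y_def)
  qed
  ultimately show ?thesis unfolding pos_def_mat_def R_def by blast
qed

lemma inv_sqrt_pd:
  fixes Q :: "real^'n^'n"
  assumes pd: "pos_def_mat Q"
  shows "pos_def_mat (inv_sqrt_mat Q)"
proof -
  have "\<exists>!G. pos_def_mat G \<and> G ** G = matrix_inv Q"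
    using pd_sqrt_exists[OF pd_inv[OF pd]] pd_sqrt_unique by metis
  from theI'[OF this] show ?thesis unfolding inv_sqrt_mat_def by blast
qed


lemma gauss1:
  "(\<integral>y. std_normal_density y *\<^sub>R cis (a * y) \<partial>lborel) = complex_of_real (exp (- (a^2) / 2))"
proof -
  have "char std_normal_distribution a = (\<integral>y. std_normal_density y *\<^sub>R iexp (a * y) \<partial>lborel)"
    unfolding char_def by (subst integral_density) auto
  also have "\<dots> = (\<integral>y. std_normal_density y *\<^sub>R cis (a * y) \<partial>lborel)"
    by (simp add: cis_conv_exp)
  finally show ?thesis by (simp add: char_std_normal_distribution)
qed

lemma gauss1_integrable:
  "integrable lborel (\<lambda>y. std_normal_density y *\<^sub>R cis (a * y))"
proof (rule Bochner_Integration.integrable_bound[OF integrable_normal_density[of 1 0]])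
  show "(\<lambda>y. std_normal_density y *\<^sub>R cis (a * y)) \<in> borel_measurable lborel"
    unfolding normal_density_def cis_conv_exp by measurable
  show "AE x in lborel. norm (std_normal_density x *\<^sub>R cis (a * x)) \<le> norm (std_normal_density x)"
    by simp
qed simp

lemma sum_Basis_inner:
  fixes y :: "'a::euclidean_space \<Rightarrow> real"
  assumes "c \<in> Basis"
  shows "(\<Sum>b\<in>Basis. y b *\<^sub>R b) \<bullet> c = y c"
  using assms by (simp add: inner_sum_left inner_Basis if_distrib cong: if_cong)

lemma prod_vec_Basis:
  fixes x :: "real^'n"
  shows "(\<Prod>i\<in>UNIV. f (x$i)) = (\<Prod>b\<in>Basis. f (x \<bullet> b))"
proof -
  have B: "(Basis :: (real^'n) set) = (\<lambda>i. axis i 1) ` UNIV" by (auto simp: Basis_vec_def)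
  have inj: "inj (\<lambda>i::'n. axis i (1::real))" by (auto simp: inj_def axis_eq_axis)
  show ?thesis unfolding B by (subst prod.reindex[OF inj]) (simp add: cart_eq_inner_axis)
qed

lemma cis_sum: "finite I \<Longrightarrow> cis (\<Sum>i\<in>I. f i) = (\<Prod>i\<in>I. cis (f i))"
  by (induction I rule: finite_induct) (auto simp: cis_mult[symmetric])

lemma gauss_char:
  fixes Z :: "'a \<Rightarrow> real^'n"
  assumes "prob_space M" and G: "std_gaussian_vec M Z"
  shows "char_fun M Z t = (\<Prod>b\<in>Basis. complex_of_real (exp (- ((t \<bullet> b)^2) / 2)))"
proof -
  define g where "g x = (\<Prod>i\<in>UNIV. std_normal_density (x$i))" for x :: "real^'n"
  have dist: "distributed M lborel Z (\<lambda>x. ennreal (g x))"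
    using G unfolding std_gaussian_vec_def g_def by simp
  have Zm[measurable]: "Z \<in> measurable M lborel" using distributed_measurable[OF dist] .
  have Zb[measurable]: "Z \<in> borel_measurable M" using Zm by simp
  have cm[measurable]: "(\<lambda>x::real^'n. cis (t \<bullet> x)) \<in> borel_measurable borel"
    unfolding cis_conv_exp by measurable
  have gm[measurable]: "g \<in> borel_measurable lborel" unfolding g_def normal_density_def by measurable
  have "char_fun M Z t = integral\<^sup>L (distr M lborel Z) (\<lambda>x. cis (t \<bullet> x))"
    unfolding char_fun_def by (subst integral_distr) auto
  also have "\<dots> = integral\<^sup>L (density lborel (\<lambda>x. ennreal (g x))) (\<lambda>x. cis (t \<bullet> x))"
    using distributed_distr_eq_density[OF dist] by simp
  also have "\<dots> = (\<integral>x. g x *\<^sub>R cis (t \<bullet> x) \<partial>lborel)"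
    by (subst integral_density) (auto simp: g_def prod_nonneg)
  also have "\<dots> = (\<integral>y. g (\<Sum>b\<in>Basis. y b *\<^sub>R b) *\<^sub>R cis (t \<bullet> (\<Sum>b\<in>Basis. y b *\<^sub>R b))
                    \<partial>(\<Pi>\<^sub>M b\<in>Basis. lborel))"
    by (subst lborel_eq) (subst integral_distr, auto)
  also have "\<dots> = (\<integral>y. (\<Prod>b\<in>Basis. std_normal_density (y b) *\<^sub>R cis ((t \<bullet> b) * y b))
                    \<partial>(\<Pi>\<^sub>M b\<in>Basis. lborel))"
  proof (rule Bochner_Integration.integral_cong[OF refl])
    fix y :: "real^'n \<Rightarrow> real"
    define x where "x = (\<Sum>b\<in>Basis. y b *\<^sub>R b)"
    have xb: "x \<bullet> b = y b" if "b \<in> Basis" for b unfolding x_def using that by (rule sum_Basis_inner)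
    have "g x = (\<Prod>b\<in>Basis. std_normal_density (y b))"
      unfolding g_def prod_vec_Basis by (intro prod.cong refl) (simp add: xb)
    moreover have "t \<bullet> x = (\<Sum>b\<in>Basis. (t \<bullet> b) * y b)"
      by (subst euclidean_inner) (intro sum.cong refl, simp add: xb)
    ultimately have "g x *\<^sub>R cis (t \<bullet> x) =
        complex_of_real (\<Prod>b\<in>Basis. std_normal_density (y b)) * (\<Prod>b\<in>Basis. cis ((t \<bullet> b) * y b))"
      by (simp add: cis_sum scaleR_conv_of_real)
    also have "\<dots> = (\<Prod>b\<in>Basis. std_normal_density (y b) *\<^sub>R cis ((t \<bullet> b) * y b))"
      by (simp add: scaleR_conv_of_real prod.distrib of_real_prod)
    finally show "g x *\<^sub>R cis (t \<bullet> x) = (\<Prod>b\<in>Basis. std_normal_density (y b) *\<^sub>R cis ((t \<bullet> b) * y b))" .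
  qed
  also have "\<dots> = (\<Prod>b\<in>Basis. (\<integral>y. std_normal_density y *\<^sub>R cis ((t \<bullet> b) * y) \<partial>lborel))"
  proof -
    interpret product_sigma_finite "\<lambda>_::real^'n. lborel" by standard
    show ?thesis by (rule product_integral_prod) (auto intro: gauss1_integrable)
  qed
  also have "\<dots> = (\<Prod>b\<in>Basis. complex_of_real (exp (- ((t \<bullet> b)^2) / 2)))"
    by (simp add: gauss1)
  finally show ?thesis .
qed

lemma gauss_char_nz:
  fixes Z :: "'a \<Rightarrow> real^'n"
  assumes "prob_space M" and G: "std_gaussian_vec M Z"
  shows "char_fun M Z t \<noteq> 0"
  unfolding gauss_char[OF assms] by (simp add: prod_zero_iff)

lemma joint_Y:
  fixes X1 X2 Z1 Z2 :: "'a \<Rightarrow> real^'d" and G1 G2 :: "real^'d^'d"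
  assumes P: "prob_space M"
    and s1: "transpose G1 = G1" and s2: "transpose G2 = G2"
    and iZ: "prob_space.indep_var M borel Z1 borel Z2"
    and iXZ: "prob_space.indep_var M borel (\<lambda>\<omega>. (X1 \<omega>, X2 \<omega>)) borel (\<lambda>\<omega>. (Z1 \<omega>, Z2 \<omega>))"
  shows "joint_char_fun M (\<lambda>\<omega>. G1 *v X1 \<omega> + Z1 \<omega>) (\<lambda>\<omega>. G2 *v X2 \<omega> + Z2 \<omega>) t1 t2 =
         joint_char_fun M X1 X2 (G1 *v t1) (G2 *v t2) * (char_fun M Z1 t1 * char_fun M Z2 t2)"
proof -
  interpret prob_space M by (rule P)
  define F where "F p = cis ((G1 *v t1) \<bullet> fst p + (G2 *v t2) \<bullet> snd p)" for p :: "(real^'d) \<times> (real^'d)"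
  define H where "H p = cis (t1 \<bullet> fst p + t2 \<bullet> snd p)" for p :: "(real^'d) \<times> (real^'d)"
  have Fm: "F \<in> borel_measurable borel" unfolding F_def
    by (intro borel_measurable_continuous_onI continuous_intros)
  have Hm: "H \<in> borel_measurable borel" unfolding H_def
    by (intro borel_measurable_continuous_onI continuous_intros)
  have ind: "indep_var borel (F \<circ> (\<lambda>\<omega>. (X1 \<omega>, X2 \<omega>))) borel (H \<circ> (\<lambda>\<omega>. (Z1 \<omega>, Z2 \<omega>)))"
    by (rule indep_var_compose[OF iXZ Fm Hm])
  have rvX: "random_variable borel (\<lambda>\<omega>. (X1 \<omega>, X2 \<omega>))" using iXZ by (rule indep_var_rv1)
  have rvZ: "random_variable borel (\<lambda>\<omega>. (Z1 \<omega>, Z2 \<omega>))" using iXZ by (rule indep_var_rv2)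
  have intF: "integrable M (F \<circ> (\<lambda>\<omega>. (X1 \<omega>, X2 \<omega>)))"
    by (rule integrable_const_bound[where B=1]) (auto simp: F_def intro: measurable_comp[OF rvX Fm])
  have intH: "integrable M (H \<circ> (\<lambda>\<omega>. (Z1 \<omega>, Z2 \<omega>)))"
    by (rule integrable_const_bound[where B=1]) (auto simp: H_def intro: measurable_comp[OF rvZ Hm])
  have dotG: "t \<bullet> (G *v x) = (G *v t) \<bullet> x" if "transpose G = G" for t x and G :: "real^'d^'d"
    using sym_dot[OF that, of t x] by simp
  have "joint_char_fun M (\<lambda>\<omega>. G1 *v X1 \<omega> + Z1 \<omega>) (\<lambda>\<omega>. G2 *v X2 \<omega> + Z2 \<omega>) t1 t2 =
        (\<integral>\<omega>. (F \<circ> (\<lambda>\<omega>. (X1 \<omega>, X2 \<omega>))) \<omega> * (H \<circ> (\<lambda>\<omega>. (Z1 \<omega>, Z2 \<omega>))) \<omega> \<partial>M)"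
    unfolding joint_char_fun_def F_def H_def
    by (intro Bochner_Integration.integral_cong refl)
       (simp add: cis_mult inner_add_right dotG[OF s1] dotG[OF s2] algebra_simps)
  also have "\<dots> = (\<integral>\<omega>. (F \<circ> (\<lambda>\<omega>. (X1 \<omega>, X2 \<omega>))) \<omega> \<partial>M) * (\<integral>\<omega>. (H \<circ> (\<lambda>\<omega>. (Z1 \<omega>, Z2 \<omega>))) \<omega> \<partial>M)"
    by (rule indep_var_lebesgue_integral[OF ind intF intH])
  also have "(\<integral>\<omega>. (F \<circ> (\<lambda>\<omega>. (X1 \<omega>, X2 \<omega>))) \<omega> \<partial>M) = joint_char_fun M X1 X2 (G1 *v t1) (G2 *v t2)"
    unfolding joint_char_fun_def F_def by simp
  also have "(\<integral>\<omega>. (H \<circ> (\<lambda>\<omega>. (Z1 \<omega>, Z2 \<omega>))) \<omega> \<partial>M) = char_fun M Z1 t1 * char_fun M Z2 t2"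
  proof -
    have c1: "(\<lambda>x::real^'d. cis (t1 \<bullet> x)) \<in> borel_measurable borel"
      by (intro borel_measurable_continuous_onI continuous_intros)
    have c2: "(\<lambda>x::real^'d. cis (t2 \<bullet> x)) \<in> borel_measurable borel"
      by (intro borel_measurable_continuous_onI continuous_intros)
    have rv1: "random_variable borel Z1" using iZ by (rule indep_var_rv1)
    have rv2: "random_variable borel Z2" using iZ by (rule indep_var_rv2)
    have "(\<integral>\<omega>. (H \<circ> (\<lambda>\<omega>. (Z1 \<omega>, Z2 \<omega>))) \<omega> \<partial>M) =
          (\<integral>\<omega>. ((\<lambda>x. cis (t1 \<bullet> x)) \<circ> Z1) \<omega> * ((\<lambda>x. cis (t2 \<bullet> x)) \<circ> Z2) \<omega> \<partial>M)"
      unfolding H_def by (simp add: cis_mult)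
    also have "\<dots> = (\<integral>\<omega>. ((\<lambda>x. cis (t1 \<bullet> x)) \<circ> Z1) \<omega> \<partial>M) * (\<integral>\<omega>. ((\<lambda>x. cis (t2 \<bullet> x)) \<circ> Z2) \<omega> \<partial>M)"
      by (rule indep_var_lebesgue_integral[OF indep_var_compose[OF iZ c1 c2]])
         (rule integrable_const_bound[where B=1], auto intro: measurable_comp[OF rv1 c1] measurable_comp[OF rv2 c2])+
    finally show ?thesis unfolding char_fun_def by simp
  qed
  finally show ?thesis .
qed

lemma scale_ineq_iff:
  fixes J C1 C2 p1 p2 :: complex and \<epsilon> :: real
  assumes "p1 \<noteq> 0" "p2 \<noteq> 0"
  shows "cmod (J * (p1 * p2) - (C1 * p1) * (C2 * p2)) \<le> \<epsilon> * cmod (C1 * p1) * cmod (C2 * p2)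
     \<longleftrightarrow> cmod (J - C1 * C2) \<le> \<epsilon> * cmod C1 * cmod C2"
proof -
  have k: "cmod p1 * cmod p2 > 0" using assms by simp
  have "J * (p1 * p2) - (C1 * p1) * (C2 * p2) = (J - C1 * C2) * (p1 * p2)" by (simp add: algebra_simps)
  hence l: "cmod (J * (p1 * p2) - (C1 * p1) * (C2 * p2)) = cmod (J - C1 * C2) * (cmod p1 * cmod p2)"
    by (simp add: norm_mult)
  have r: "\<epsilon> * cmod (C1 * p1) * cmod (C2 * p2) = (\<epsilon> * cmod C1 * cmod C2) * (cmod p1 * cmod p2)"
    by (simp add: norm_mult algebra_simps)
  show ?thesis unfolding l r using k by (simp add: mult_le_cancel_right_pos)
qed

theorem lemma16:
  fixes M :: "'a measure"
    and Q1 Q2 :: "real^'d^'d"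
    and X1 X2 Z11 Z22 :: "'a \<Rightarrow> real^'d"
    and \<epsilon> :: real
  assumes "prob_space M"
    and "pos_def_mat Q1" and "pos_def_mat Q2"
    and "X1 \<in> borel_measurable M" and "X2 \<in> borel_measurable M"
    and "std_gaussian_vec M Z11" and "std_gaussian_vec M Z22"
    and "prob_space.indep_var M borel Z11 borel Z22"
    and "prob_space.indep_var M borel (\<lambda>\<omega>. (X1 \<omega>, X2 \<omega>)) borel (\<lambda>\<omega>. (Z11 \<omega>, Z22 \<omega>))"
  shows "robustly_dependent M \<epsilon>
           (\<lambda>\<omega>. inv_sqrt_mat Q1 *v X1 \<omega> + Z11 \<omega>) (\<lambda>\<omega>. inv_sqrt_mat Q2 *v X2 \<omega> + Z22 \<omega>)
         \<longleftrightarrow> robustly_dependent M \<epsilon> X1 X2"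
proof -
  interpret prob_space M by (rule assms(1))
  define G1 where "G1 = inv_sqrt_mat Q1"
  define G2 where "G2 = inv_sqrt_mat Q2"
  have pd1: "pos_def_mat G1" unfolding G1_def by (rule inv_sqrt_pd[OF assms(2)])
  have pd2: "pos_def_mat G2" unfolding G2_def by (rule inv_sqrt_pd[OF assms(3)])
  have s1: "transpose G1 = G1" and s2: "transpose G2 = G2" using pd1 pd2 unfolding pos_def_mat_def by auto
  define Y1 where "Y1 \<omega> = G1 *v X1 \<omega> + Z11 \<omega>" for \<omega>
  define Y2 where "Y2 \<omega> = G2 *v X2 \<omega> + Z22 \<omega>" for \<omega>
  have JY: "joint_char_fun M Y1 Y2 t1 t2 =
         joint_char_fun M X1 X2 (G1 *v t1) (G2 *v t2) * (char_fun M Z11 t1 * char_fun M Z22 t2)" for t1 t2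
    unfolding Y1_def[abs_def] Y2_def[abs_def] by (rule joint_Y[OF assms(1) s1 s2 assms(8) assms(9)])
  have c0: "char_fun M Z t = 1" if "t = 0" for t and Z :: "'a \<Rightarrow> real^'d"
    using that unfolding char_fun_def by (simp add: prob_space)
  have CY1: "char_fun M Y1 t = char_fun M X1 (G1 *v t) * char_fun M Z11 t" for t
  proof -
    have "char_fun M Y1 t = joint_char_fun M Y1 Y2 t 0"
      "char_fun M X1 (G1 *v t) = joint_char_fun M X1 X2 (G1 *v t) 0"
      by (simp_all add: char_fun_def joint_char_fun_def)
    thus ?thesis using JY[of t 0] c0[of 0] by simp
  qed
  have CY2: "char_fun M Y2 t = char_fun M X2 (G2 *v t) * char_fun M Z22 t" for t
  proof -
    have "char_fun M Y2 t = joint_char_fun M Y1 Y2 0 t"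
      "char_fun M X2 (G2 *v t) = joint_char_fun M X1 X2 0 (G2 *v t)"
      by (simp_all add: char_fun_def joint_char_fun_def)
    thus ?thesis using JY[of 0 t] c0[of 0] by simp
  qed
  have nz1: "char_fun M Z11 t \<noteq> 0" for t by (rule gauss_char_nz[OF assms(1) assms(6)])
  have nz2: "char_fun M Z22 t \<noteq> 0" for t by (rule gauss_char_nz[OF assms(1) assms(7)])
  define P where "P s1 s2 \<longleftrightarrow> cmod (joint_char_fun M X1 X2 s1 s2 - char_fun M X1 s1 * char_fun M X2 s2)
      \<le> \<epsilon> * cmod (char_fun M X1 s1) * cmod (char_fun M X2 s2)" for s1 s2
  have "robustly_dependent M \<epsilon> Y1 Y2 \<longleftrightarrow> (\<forall>t1 t2. P (G1 *v t1) (G2 *v t2))"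
    unfolding robustly_dependent_def P_def JY CY1 CY2 using scale_ineq_iff[OF nz1 nz2] by simp
  also have "\<dots> \<longleftrightarrow> (\<forall>s1 s2. P s1 s2)"
  proof
    assume H: "\<forall>t1 t2. P (G1 *v t1) (G2 *v t2)"
    show "\<forall>s1 s2. P s1 s2"
    proof (intro allI)
      fix s1 s2
      obtain t1 where "s1 = G1 *v t1" using pd_surj[OF pd1] by (metis surjD)
      moreover obtain t2 where "s2 = G2 *v t2" using pd_surj[OF pd2] by (metis surjD)
      ultimately show "P s1 s2" using H by simp
    qed
  qed simp
  also have "\<dots> \<longleftrightarrow> robustly_dependent M \<epsilon> X1 X2" unfolding robustly_dependent_def P_def by simp
  finally show ?thesis unfolding Y1_def Y2_def G1_def G2_def .
qed

end
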